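(* Let $n\ge1$ and let $A$ be a set with an $(n+1)$-ary operation $\theta$, binary operations $\alpha_1,\dots,\alpha_n$ and elements $e_1,\dots,e_n$ such that $\alpha_i(a,a)=e_i$ and $\theta(\alpha_1(a,b),\dots,\alpha_n(a,b),b)=a$ for all $a,b\in A$. The following conditions are equivalent: (i) for every $b\in A$ the map $\theta_b:A^n\to A$, $\theta_b(x_1,\dots,x_n)=\theta(x_1,\dots,x_n,b)$, is a bijection; (ii) for all $a,b\in A$, the equation $\theta(x_1,\dots,x_n,b)=a$ in the unknowns $x_1,\dots,x_n$ has a unique solution; (iii) for all $b,a_1,\dots,a_n\in A$, the system of equations $\alpha_i(x,b)=a_i$ $(1\le i\le n)$ in one unknown $x$ has a (unique) solution; (iv) for all $a_1,\dots,a_n,b\in A$ and every $i$ with $1\le i\le n$, $\alpha_i(\theta(a_1,\dots,a_n,b),b)=a_i$.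
   Context: The setting is that of an algebra $A$ in a protomodular variety, with $\theta,\alpha_i,e_i$ the operations and constants witnessing protomodularity as described in the claim. *)

theory Defs
  imports Main
begin

end

theory Submission
  imports Defs
begin

lemma uniq_ex1: "\<exists>!x. P x \<Longrightarrow> P a \<Longrightarrow> P b \<Longrightarrow> a = b"
  by blast

theorem lemma3p12:
  fixes n :: nat
    and theta :: "'a list \<Rightarrow> 'a \<Rightarrow> 'a"
    and alpha :: "nat \<Rightarrow> 'a \<Rightarrow> 'a \<Rightarrow> 'a"
    and e :: "nat \<Rightarrow> 'a"
  assumes "n \<ge> 1"
    and "\<And>i a. i \<in> {1..n} \<Longrightarrow> alpha i a a = e i"
    and "\<And>a b. theta (map (\<lambda>i. alpha i a b) [1..<n+1]) b = a"
  shows "((\<forall>b. bij_betw (\<lambda>xs. theta xs b) {xs. length xs = n} UNIV)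
          \<longleftrightarrow> (\<forall>a b. \<exists>!xs. length xs = n \<and> theta xs b = a))
       \<and> ((\<forall>a b. \<exists>!xs. length xs = n \<and> theta xs b = a)
          \<longleftrightarrow> (\<forall>b as. length as = n \<longrightarrow>
                 (\<exists>x. \<forall>i\<in>{1..n}. alpha i x b = as ! (i - 1))))
       \<and> ((\<forall>b as. length as = n \<longrightarrow>
                 (\<exists>x. \<forall>i\<in>{1..n}. alpha i x b = as ! (i - 1)))
          \<longleftrightarrow> (\<forall>as b. length as = n \<longrightarrow>
                 (\<forall>i\<in>{1..n}. alpha i (theta as b) b = as ! (i - 1))))"
proof -
  define f where "f = (\<lambda>x b. map (\<lambda>i. alpha i x b) [1..<n+1])"
  have lenf: "length (f x b) = n" for x b by (simp add: f_def)
  have th: "theta (f a b) b = a" for a b using assms(3) by (simp add: f_def)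
  have key: "(\<forall>i\<in>{1..n}. alpha i x b = xs ! (i - 1)) \<longleftrightarrow> f x b = xs"
    if "length xs = n" for x b xs
  proof
    assume H: "\<forall>i\<in>{1..n}. alpha i x b = xs ! (i - 1)"
    show "f x b = xs"
    proof (rule nth_equalityI)
      show "length (f x b) = length xs" using that lenf by simp
      fix j assume "j < length (f x b)"
      then have "j < n" using lenf by simp
      then show "f x b ! j = xs ! j" using H[rule_format, of "j+1"]
        by (simp add: f_def nth_map_upt del: upt_Suc)
    qed
  next
    assume "f x b = xs"
    then show "\<forall>i\<in>{1..n}. alpha i x b = xs ! (i - 1)"
      by (auto simp: f_def nth_map_upt simp del: upt_Suc)
  qed
  have A: "(\<forall>b. bij_betw (\<lambda>xs. theta xs b) {xs. length xs = n} UNIV)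
          \<longleftrightarrow> (\<forall>a b. \<exists>!xs. length xs = n \<and> theta xs b = a)"
  proof
    assume H: "\<forall>b. bij_betw (\<lambda>xs. theta xs b) {xs. length xs = n} UNIV"
    show "\<forall>a b. \<exists>!xs. length xs = n \<and> theta xs b = a"
    proof (intro allI)
      fix a b
      show "\<exists>!xs. length xs = n \<and> theta xs b = a"
      proof (rule ex1I[of _ "f a b"])
        show "length (f a b) = n \<and> theta (f a b) b = a" using lenf th by simp
        fix xs assume X: "length xs = n \<and> theta xs b = a"
        have "inj_on (\<lambda>xs. theta xs b) {xs. length xs = n}" using H bij_betw_def by blast
        then show "xs = f a b" using X lenf th unfolding inj_on_def by simp
      qed
    qed
  next
    assume H: "\<forall>a b. \<exists>!xs. length xs = n \<and> theta xs b = a"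
    show "\<forall>b. bij_betw (\<lambda>xs. theta xs b) {xs. length xs = n} UNIV"
    proof (intro allI)
      fix b
      have "inj_on (\<lambda>xs. theta xs b) {xs. length xs = n}"
      proof (rule inj_onI)
        fix xs ys assume "xs \<in> {xs. length xs = n}" "ys \<in> {xs. length xs = n}"
          and E: "theta xs b = theta ys b"
        then have "length xs = n" "length ys = n" by simp_all
        then show "xs = ys"
          using uniq_ex1[OF H[rule_format, where a="theta xs b" and b=b], of xs ys] E by argo
      qed
      moreover have "(\<lambda>xs. theta xs b) ` {xs. length xs = n} = UNIV"
      proof (intro set_eqI iffI)
        fix a show "a \<in> (\<lambda>xs. theta xs b) ` {xs. length xs = n}"
          using lenf[of a b] th[of a b] by (intro image_eqI[of _ _ "f a b"]) auto
      qed auto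
      ultimately show "bij_betw (\<lambda>xs. theta xs b) {xs. length xs = n} UNIV"
        by (simp add: bij_betw_def)
    qed
  qed
  have B: "(\<forall>a b. \<exists>!xs. length xs = n \<and> theta xs b = a)
          \<longleftrightarrow> (\<forall>b as. length as = n \<longrightarrow>
                 (\<exists>x. \<forall>i\<in>{1..n}. alpha i x b = as ! (i - 1)))"
  proof
    assume H: "\<forall>a b. \<exists>!xs. length xs = n \<and> theta xs b = a"
    show "\<forall>b as. length as = n \<longrightarrow> (\<exists>x. \<forall>i\<in>{1..n}. alpha i x b = as ! (i - 1))"
    proof (intro allI impI)
      fix b and as :: "'a list" assume L: "length as = n"
      have "f (theta as b) b = as"
        using uniq_ex1[OF H[rule_format, where a="theta as b" and b=b], of "f (theta as b) b" as] L lenf th by simp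
      then show "\<exists>x. \<forall>i\<in>{1..n}. alpha i x b = as ! (i - 1)" using key L by blast
    qed
  next
    assume H: "\<forall>b as. length as = n \<longrightarrow> (\<exists>x. \<forall>i\<in>{1..n}. alpha i x b = as ! (i - 1))"
    show "\<forall>a b. \<exists>!xs. length xs = n \<and> theta xs b = a"
    proof (intro allI)
      fix a b
      show "\<exists>!xs. length xs = n \<and> theta xs b = a"
      proof (rule ex1I[of _ "f a b"])
        show "length (f a b) = n \<and> theta (f a b) b = a" using lenf th by simp
        fix xs assume X: "length xs = n \<and> theta xs b = a"
        then obtain x where "\<forall>i\<in>{1..n}. alpha i x b = xs ! (i - 1)" using H by blast
        then have "f x b = xs" using key X by blast
        then show "xs = f a b" using X th by metis
      qed
    qed
  qed
  have C: "(\<forall>b as. length as = n \<longrightarrow>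
                 (\<exists>x. \<forall>i\<in>{1..n}. alpha i x b = as ! (i - 1)))
          \<longleftrightarrow> (\<forall>as b. length as = n \<longrightarrow>
                 (\<forall>i\<in>{1..n}. alpha i (theta as b) b = as ! (i - 1)))"
  proof
    assume H: "\<forall>b as. length as = n \<longrightarrow> (\<exists>x. \<forall>i\<in>{1..n}. alpha i x b = as ! (i - 1))"
    show "\<forall>as b. length as = n \<longrightarrow> (\<forall>i\<in>{1..n}. alpha i (theta as b) b = as ! (i - 1))"
    proof (intro allI impI)
      fix as :: "'a list" and b assume L: "length as = n"
      then obtain x where "\<forall>i\<in>{1..n}. alpha i x b = as ! (i - 1)" using H by blast
      then have "f x b = as" using key L by blast
      then have "theta as b = x" using th by metis
      then show "\<forall>i\<in>{1..n}. alpha i (theta as b) b = as ! (i - 1)"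
        using \<open>f x b = as\<close> key L by blast
    qed
  next
    assume H: "\<forall>as b. length as = n \<longrightarrow> (\<forall>i\<in>{1..n}. alpha i (theta as b) b = as ! (i - 1))"
    then show "\<forall>b as. length as = n \<longrightarrow> (\<exists>x. \<forall>i\<in>{1..n}. alpha i x b = as ! (i - 1))"
      by blast
  qed
  show ?thesis by (rule conjI[OF A conjI[OF B C]])
qed

end
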